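(* A Banach space $X$ contains no (isomorphic) copy of $c_0$ if and only if for each series $\sum x_n$ in $X$ which is not unconditionally convergent both sets $E=\left\{s \in S : \left(\sum_{i=1}^n x_{s(i)}\right)_n \text{ is bounded}\right\}$ and $F=\left\{p \in P : \left(\sum_{i=1}^n x_{p(i)}\right)_n \text{ is bounded}\right\}$ are meager in $S$ and $P$, respectively.
   Context: $S=\{s\in\mathbb{N}^{\mathbb{N}} : s \text{ strictly increasing}\}$ and $P=\{p\in\mathbb{N}^{\mathbb{N}} : p \text{ a bijection of }\mathbb{N}\}$, with the subspace topology of $\mathbb{N}^{\mathbb{N}}$ (product of discrete spaces). *)

theory Defs
  imports "HOL-Analysis.Analysis"
begin

definition c0_space :: "(nat \<Rightarrow> real) set" where
  "c0_space = {a. a \<longlonglongrightarrow> 0}"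

definition sup_norm :: "(nat \<Rightarrow> real) \<Rightarrow> real" where
  "sup_norm a = (SUP n. \<bar>a n\<bar>)"

text \<open>X contains an isomorphic copy of c_0: there is a linear map T from c_0 into X
  which is an isomorphism onto its range (bounded and bounded below).\<close>
definition contains_copy_of_c0 :: "'a::real_normed_vector itself \<Rightarrow> bool" where
  "contains_copy_of_c0 _ \<longleftrightarrow>
     (\<exists>T :: (nat \<Rightarrow> real) \<Rightarrow> 'a.
        (\<forall>a\<in>c0_space. \<forall>b\<in>c0_space. T (\<lambda>n. a n + b n) = T a + T b) \<and>
        (\<forall>c. \<forall>a\<in>c0_space. T (\<lambda>n. c * a n) = c *\<^sub>R T a) \<and>
        (\<exists>m M. 0 < m \<and> (\<forall>a\<in>c0_space. m * sup_norm a \<le> norm (T a) \<and> norm (T a) \<le> M * sup_norm a)))"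

definition unconditionally_convergent :: "(nat \<Rightarrow> 'a::real_normed_vector) \<Rightarrow> bool" where
  "unconditionally_convergent x \<longleftrightarrow> (\<forall>p. bij p \<longrightarrow> summable (\<lambda>n. x (p n)))"

definition nowhere_dense_in :: "'a topology \<Rightarrow> 'a set \<Rightarrow> bool" where
  "nowhere_dense_in T A \<longleftrightarrow> A \<subseteq> topspace T \<and> T interior_of (T closure_of A) = {}"

definition meager_in :: "'a topology \<Rightarrow> 'a set \<Rightarrow> bool" where
  "meager_in T A \<longleftrightarrow> A \<subseteq> topspace T \<and>
     (\<exists>\<F>. countable \<F> \<and> (\<forall>N\<in>\<F>. nowhere_dense_in T N) \<and> A \<subseteq> \<Union>\<F>)"

definition baire_space :: "(nat \<Rightarrow> nat) topology" where
  "baire_space = product_topology (\<lambda>_. discrete_topology UNIV) UNIV"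

definition incr_seqs :: "(nat \<Rightarrow> nat) set" where
  "incr_seqs = {s. strict_mono s}"

definition perms :: "(nat \<Rightarrow> nat) set" where
  "perms = {p. bij p}"

end

theory Submission
  imports Defs
begin

lemma convex_step:
  fixes v u :: "'a::real_normed_vector"
  assumes "\<bar>c\<bar> \<le> 1"
  shows "norm (v + c *\<^sub>R u) \<le> max (norm (v + u)) (norm (v - u))"
proof -
  have a1: "(1+c)/2 + (1-c)/2 = 1" "(1+c)/2 - (1-c)/2 = c" by (simp_all add: field_simps)
  have "((1+c)/2) *\<^sub>R (v + u) + ((1-c)/2) *\<^sub>R (v - u) = ((1+c)/2 + (1-c)/2) *\<^sub>R v + ((1+c)/2 - (1-c)/2) *\<^sub>R u"
    by (simp only: scaleR_add_right scaleR_diff_right scaleR_add_left scaleR_diff_left) (simp add: algebra_simps)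
  then have eq: "v + c *\<^sub>R u = ((1+c)/2) *\<^sub>R (v + u) + ((1-c)/2) *\<^sub>R (v - u)"
    unfolding a1 by simp
  have "norm (v + c *\<^sub>R u) \<le> norm (((1+c)/2) *\<^sub>R (v + u)) + norm (((1-c)/2) *\<^sub>R (v - u))"
    unfolding eq by (rule norm_triangle_ineq)
  also have "\<dots> = ((1+c)/2) * norm (v + u) + ((1-c)/2) * norm (v - u)"
    using assms by simp
  also have "\<dots> \<le> ((1+c)/2) * max (norm (v + u)) (norm (v - u)) + ((1-c)/2) * max (norm (v + u)) (norm (v - u))"
    using assms by (intro add_mono mult_left_mono) auto
  also have "\<dots> = max (norm (v + u)) (norm (v - u))"
    by (simp add: field_simps)
  finally show ?thesis .
qed

lemma sign_aux:
  fixes y :: "nat \<Rightarrow> 'a::real_normed_vector"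
  assumes "finite A" "\<forall>i\<in>A. \<bar>c i\<bar> \<le> 1"
  shows "\<exists>\<sigma>. (\<forall>i\<in>A. \<sigma> i = 1 \<or> \<sigma> i = -1) \<and>
           norm (w + (\<Sum>i\<in>A. c i *\<^sub>R y i)) \<le> norm (w + (\<Sum>i\<in>A. \<sigma> i *\<^sub>R y i))"
  using assms
proof (induction A arbitrary: w rule: finite_induct)
  case empty
  then show ?case by auto
next
  case (insert j A)
  obtain \<sigma> where s1: "\<forall>i\<in>A. \<sigma> i = 1 \<or> \<sigma> i = -1"
    and s2: "norm ((w + c j *\<^sub>R y j) + (\<Sum>i\<in>A. c i *\<^sub>R y i)) \<le> norm ((w + c j *\<^sub>R y j) + (\<Sum>i\<in>A. \<sigma> i *\<^sub>R y i))"
    using insert.IH[of "w + c j *\<^sub>R y j"] insert.prems by auto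
  define v where "v = w + (\<Sum>i\<in>A. \<sigma> i *\<^sub>R y i)"
  have cj: "\<bar>c j\<bar> \<le> 1" using insert.prems by auto
  have "norm (v + c j *\<^sub>R y j) \<le> max (norm (v + y j)) (norm (v - y j))"
    by (rule convex_step[OF cj])
  then obtain e where e: "e = 1 \<or> e = -1" and ve: "norm (v + c j *\<^sub>R y j) \<le> norm (v + e *\<^sub>R y j)"
  proof (cases "norm (v + y j) \<le> norm (v - y j)")
    case True
    then show ?thesis using that[of "-1"] \<open>norm (v + c j *\<^sub>R y j) \<le> max (norm (v + y j)) (norm (v - y j))\<close> by simp
  next
    case False
    then show ?thesis using that[of 1] \<open>norm (v + c j *\<^sub>R y j) \<le> max (norm (v + y j)) (norm (v - y j))\<close> by simp
  qed
  define \<tau> where "\<tau> = \<sigma>(j := e)"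
  have sumA: "(\<Sum>i\<in>A. \<tau> i *\<^sub>R y i) = (\<Sum>i\<in>A. \<sigma> i *\<^sub>R y i)"
    using insert.hyps by (intro sum.cong) (auto simp: \<tau>_def)
  have "norm (w + (\<Sum>i\<in>insert j A. c i *\<^sub>R y i)) = norm ((w + c j *\<^sub>R y j) + (\<Sum>i\<in>A. c i *\<^sub>R y i))"
    using insert.hyps by (simp add: algebra_simps)
  also have "\<dots> \<le> norm (v + c j *\<^sub>R y j)"
    using s2 by (simp add: v_def algebra_simps)
  also have "\<dots> \<le> norm (v + e *\<^sub>R y j)" by (rule ve)
  also have "\<dots> = norm (w + (\<Sum>i\<in>insert j A. \<tau> i *\<^sub>R y i))"
    using insert.hyps sumA by (simp add: v_def \<tau>_def algebra_simps)
  finally have fin: "norm (w + (\<Sum>i\<in>insert j A. c i *\<^sub>R y i)) \<le> norm (w + (\<Sum>i\<in>insert j A. \<tau> i *\<^sub>R y i))" .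
  have "\<forall>i\<in>insert j A. \<tau> i = 1 \<or> \<tau> i = -1" using s1 e by (auto simp: \<tau>_def)
  then show ?case using fin by blast
qed

lemma sign_sum_bound:
  fixes y :: "nat \<Rightarrow> 'a::real_normed_vector"
  assumes C: "\<And>A. finite A \<Longrightarrow> norm (sum y A) \<le> C"
    and "finite A" "\<forall>i\<in>A. \<sigma> i = 1 \<or> \<sigma> i = -1"
  shows "norm (\<Sum>i\<in>A. \<sigma> i *\<^sub>R y i) \<le> 2 * C"
proof -
  define P where "P = {i\<in>A. \<sigma> i = 1}"
  define N where "N = {i\<in>A. \<sigma> i \<noteq> 1}"
  have AU: "A = P \<union> N" by (auto simp: P_def N_def)
  have fP: "finite P" and fN: "finite N" using assms(2) by (auto simp: P_def N_def)
  have e1: "(\<Sum>i\<in>A. \<sigma> i *\<^sub>R y i) = (\<Sum>i\<in>P. \<sigma> i *\<^sub>R y i) + (\<Sum>i\<in>N. \<sigma> i *\<^sub>R y i)"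
    unfolding AU using fP fN by (intro sum.union_disjoint) (auto simp: P_def N_def)
  have e2: "(\<Sum>i\<in>P. \<sigma> i *\<^sub>R y i) = sum y P" by (intro sum.cong) (auto simp: P_def)
  have e3: "(\<Sum>i\<in>N. \<sigma> i *\<^sub>R y i) = (\<Sum>i\<in>N. - y i)"
    using assms(3) by (intro sum.cong) (auto simp: N_def)
  have e4: "(\<Sum>i\<in>N. - y i) = - sum y N" by (rule sum_negf)
  have "norm (\<Sum>i\<in>A. \<sigma> i *\<^sub>R y i) = norm (sum y P + - sum y N)" using e1 e2 e3 e4 by simp
  also have "\<dots> \<le> norm (sum y P) + norm (- sum y N)" by (rule norm_triangle_ineq)
  also have "\<dots> = norm (sum y P) + norm (sum y N)" by simp
  also have "\<dots> \<le> 2 * C" using C[OF fP] C[OF fN] by simp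
  finally show ?thesis .
qed

lemma coef_sum_bound:
  fixes y :: "nat \<Rightarrow> 'a::real_normed_vector"
  assumes C: "\<And>A. finite A \<Longrightarrow> norm (sum y A) \<le> C"
    and fA: "finite A" and cb: "\<forall>i\<in>A. \<bar>c i\<bar> \<le> B" and B0: "0 \<le> B"
  shows "norm (\<Sum>i\<in>A. c i *\<^sub>R y i) \<le> 2 * C * B"
proof (cases "B > 0")
  case True
  have "\<bar>c i / B\<bar> \<le> 1" if "i \<in> A" for i
  proof -
    have "\<bar>c i / B\<bar> = \<bar>c i\<bar> / B" using True by simp
    also have "\<dots> \<le> 1" using cb that True by simp
    finally show ?thesis .
  qed
  then have cb1: "\<forall>i\<in>A. \<bar>c i / B\<bar> \<le> 1" by blast
  obtain \<sigma> where s: "\<forall>i\<in>A. \<sigma> i = 1 \<or> \<sigma> i = -1"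
    and le: "norm (0 + (\<Sum>i\<in>A. (c i / B) *\<^sub>R y i)) \<le> norm (0 + (\<Sum>i\<in>A. \<sigma> i *\<^sub>R y i))"
    using sign_aux[OF fA cb1, where w=0 and y=y] by blast
  have "(\<Sum>i\<in>A. c i *\<^sub>R y i) = (\<Sum>i\<in>A. B *\<^sub>R ((c i / B) *\<^sub>R y i))"
    using True by (intro sum.cong) auto
  also have "\<dots> = B *\<^sub>R (\<Sum>i\<in>A. (c i / B) *\<^sub>R y i)"
    by (rule scaleR_sum_right[symmetric])
  finally have "norm (\<Sum>i\<in>A. c i *\<^sub>R y i) = B * norm (\<Sum>i\<in>A. (c i / B) *\<^sub>R y i)"
    using True by simp
  also have "\<dots> \<le> B * (2 * C)"
    using le sign_sum_bound[OF C fA s] True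
    by (intro mult_left_mono) auto
  finally show ?thesis by (simp add: algebra_simps)
next
  case False
  then have "\<forall>i\<in>A. c i = 0" using cb by force
  then have "(\<Sum>i\<in>A. c i *\<^sub>R y i) = 0" by simp
  show ?thesis
  proof (cases "A = {}")
    case True then show ?thesis using C[of "{}"] B0 by simp
  next
    case False
    then obtain i where "i \<in> A" by blast
    then have "B \<ge> 0" using cb by force
    then have "B = 0" using \<open>\<not> B > 0\<close> by simp
    then show ?thesis using \<open>(\<Sum>i\<in>A. c i *\<^sub>R y i) = 0\<close> by simp
  qed
qed

lemma bad_finite:
  fixes y :: "nat \<Rightarrow> 'a::real_normed_vector"
  assumes C: "\<And>A. finite A \<Longrightarrow> norm (sum y A) \<le> C"
    and eps: "\<epsilon> > 0" "\<And>k. \<epsilon> \<le> norm (y k)"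
    and eta: "\<eta> > 0"
  shows "finite {k. \<exists>t. norm (u + t *\<^sub>R y k) < norm u - \<eta>}"
proof -
  define T where "T = 2 * norm u / \<epsilon>"
  have T0: "0 \<le> T" using eps by (simp add: T_def)
  have tb: "\<bar>t\<bar> \<le> T" if "norm (u + t *\<^sub>R y k) < norm u - \<eta>" for k t
  proof -
    have "\<bar>t\<bar> * \<epsilon> \<le> \<bar>t\<bar> * norm (y k)" using eps by (intro mult_left_mono) auto
    also have "\<dots> = norm (t *\<^sub>R y k)" by simp
    also have "\<dots> \<le> norm (u + t *\<^sub>R y k) + norm u"
      by (metis add_diff_cancel_left' norm_triangle_ineq4 add.commute)
    also have "\<dots> \<le> 2 * norm u" using that eta by simp
    finally have "\<bar>t\<bar> * \<epsilon> \<le> 2 * norm u" .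
    then show ?thesis using eps by (simp add: T_def pos_le_divide_eq)
  qed
  define Bd where "Bd = nat \<lceil>2 * C * T / \<eta>\<rceil>"
  have "finite {k. \<exists>t. norm (u + t *\<^sub>R y k) < norm u - \<eta>} \<and> card {k. \<exists>t. norm (u + t *\<^sub>R y k) < norm u - \<eta>} \<le> Bd"
  proof (rule finite_if_finite_subsets_card_bdd)
    fix G assume GB: "G \<subseteq> {k. \<exists>t. norm (u + t *\<^sub>R y k) < norm u - \<eta>}" and fG: "finite G"
    then have "\<forall>k\<in>G. \<exists>t. norm (u + t *\<^sub>R y k) < norm u - \<eta>" by blast
    then obtain tf where tf: "\<forall>k\<in>G. norm (u + tf k *\<^sub>R y k) < norm u - \<eta>"
      by (rule bchoice[elim_format]) blast
    have tfb: "\<forall>k\<in>G. \<bar>tf k\<bar> \<le> T" using tf tb by blast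
    have s1: "(\<Sum>k\<in>G. u) = (\<Sum>k\<in>G. u + tf k *\<^sub>R y k) - (\<Sum>k\<in>G. tf k *\<^sub>R y k)"
      by (simp add: sum.distrib)
    have "real (card G) * norm u = norm (\<Sum>k\<in>G. u)" by (simp add: sum_constant_scaleR)
    also have "\<dots> \<le> norm (\<Sum>k\<in>G. u + tf k *\<^sub>R y k) + norm (\<Sum>k\<in>G. tf k *\<^sub>R y k)"
      unfolding s1 by (rule norm_triangle_ineq4)
    also have "\<dots> \<le> (\<Sum>k\<in>G. norm (u + tf k *\<^sub>R y k)) + 2 * C * T"
      by (intro add_mono norm_sum coef_sum_bound[OF C fG tfb T0])
    also have "\<dots> \<le> (\<Sum>k\<in>G. norm u - \<eta>) + 2 * C * T"
      using tf by (intro add_mono sum_mono) auto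
    also have "\<dots> = real (card G) * norm u - real (card G) * \<eta> + 2 * C * T"
      by (simp add: algebra_simps)
    finally have "real (card G) * \<eta> \<le> 2 * C * T" by simp
    then have "real (card G) \<le> 2 * C * T / \<eta>" using eta by (simp add: pos_le_divide_eq)
    then show "card G \<le> Bd" unfolding Bd_def by linarith
  qed
  then show ?thesis by blast
qed

lemma floor_grid:
  assumes h: "h > 0" and b: "\<bar>b\<bar> \<le> (1::real)"
  shows "\<bar>b - h * of_int \<lfloor>b / h\<rfloor>\<bar> \<le> h"
    and "\<bar>\<lfloor>b / h\<rfloor>\<bar> \<le> \<lceil>1 / h\<rceil>"
proof -
  have f1: "of_int \<lfloor>b / h\<rfloor> \<le> b / h" by (rule of_int_floor_le)
  have f2: "b / h < of_int \<lfloor>b / h\<rfloor> + 1" by (rule real_of_int_floor_add_one_gt)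
  have "h * of_int \<lfloor>b / h\<rfloor> \<le> b" using f1 h by (simp add: le_divide_eq mult.commute)
  moreover have "b < h * of_int \<lfloor>b / h\<rfloor> + h" using f2 h by (simp add: divide_less_eq algebra_simps)
  ultimately show "\<bar>b - h * of_int \<lfloor>b / h\<rfloor>\<bar> \<le> h" by simp
  have "b / h \<le> 1 / h" using b h by (simp add: divide_right_mono)
  then have u: "\<lfloor>b / h\<rfloor> \<le> \<lceil>1 / h\<rceil>" by (meson floor_le_ceiling floor_mono order_trans)
  have "(-1) / h \<le> b / h" using b h by (intro divide_right_mono) auto
  then have "- (1 / h) \<le> b / h" by simp
  then have "\<lfloor>- (1/h)\<rfloor> \<le> \<lfloor>b / h\<rfloor>" by (rule floor_mono)
  then have l: "- \<lceil>1 / h\<rceil> \<le> \<lfloor>b / h\<rfloor>" by (simp add: ceiling_def)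
  show "\<bar>\<lfloor>b / h\<rfloor>\<bar> \<le> \<lceil>1 / h\<rceil>" using u l by simp
qed

lemma threshold:
  fixes y :: "nat \<Rightarrow> 'a::real_normed_vector"
  assumes C: "\<And>A. finite A \<Longrightarrow> norm (sum y A) \<le> C"
    and eps: "\<epsilon> > 0" "\<And>k. \<epsilon> \<le> norm (y k)"
    and dl: "\<delta> > 0"
  shows "\<exists>N. \<forall>k\<ge>N. \<forall>b. (\<forall>j\<le>m. \<bar>b j\<bar> \<le> 1) \<longrightarrow> (\<forall>t.
           norm (\<Sum>j\<le>m. b j *\<^sub>R y j) - \<delta> \<le> norm ((\<Sum>j\<le>m. b j *\<^sub>R y j) + t *\<^sub>R y k))"
proof -
  have C0: "0 \<le> C" using C[of "{}"] by simp
  define h where "h = min 1 (\<delta> / (8 * C + 1))"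
  have h0: "h > 0" using dl C0 by (simp add: h_def)
  have h1: "h \<le> \<delta> / (8 * C + 1)" by (simp add: h_def)
  have hC: "4 * C * h \<le> \<delta> / 2"
  proof -
    have "4 * C * h \<le> 4 * C * (\<delta> / (8 * C + 1))" using h1 C0 by (intro mult_left_mono) auto
    also have "\<dots> \<le> \<delta> / 2" using C0 dl by (simp add: field_simps)
    finally show ?thesis .
  qed
  define u where "u = (\<lambda>b::nat\<Rightarrow>real. \<Sum>j\<le>m. b j *\<^sub>R y j)"
  define gr where "gr = (\<lambda>(b::nat\<Rightarrow>real) j. if j \<le> m then h * of_int \<lfloor>b j / h\<rfloor> else 0)"
  define Cube where "Cube = {b::nat\<Rightarrow>real. \<forall>j\<le>m. \<bar>b j\<bar> \<le> 1}"
  define NN where "NN = \<lceil>1 / h\<rceil>"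
  have "gr ` Cube \<subseteq> (\<lambda>q j. if j \<le> m then h * of_int (q j) else 0) ` (PiE {..m} (\<lambda>_. {-NN..NN}))"
  proof
    fix g assume "g \<in> gr ` Cube"
    then obtain b where b: "b \<in> Cube" and g: "g = gr b" by blast
    define q where "q = restrict (\<lambda>j. \<lfloor>b j / h\<rfloor>) {..m}"
    have "q \<in> PiE {..m} (\<lambda>_. {-NN..NN})"
    proof (rule PiE_I)
      fix j assume j: "j \<in> {..m}"
      then have "\<bar>b j\<bar> \<le> 1" using b by (auto simp: Cube_def)
      then have "\<bar>\<lfloor>b j / h\<rfloor>\<bar> \<le> NN" using floor_grid(2)[OF h0] by (simp add: NN_def)
      then show "q j \<in> {-NN..NN}" using j by (simp add: q_def abs_le_iff)
    next
      fix j assume "j \<notin> {..m}" then show "q j = undefined" by (simp add: q_def)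
    qed
    moreover have "g = (\<lambda>j. if j \<le> m then h * of_int (q j) else 0)"
      by (auto simp: g gr_def q_def)
    ultimately show "g \<in> (\<lambda>q j. if j \<le> m then h * of_int (q j) else 0) ` (PiE {..m} (\<lambda>_. {-NN..NN}))"
      by blast
  qed
  then have fGS: "finite (gr ` Cube)"
    by (rule finite_subset) (intro finite_imageI finite_PiE, auto)
  define BB where "BB = (\<Union>g\<in>gr ` Cube. {k. \<exists>t. norm (u g + t *\<^sub>R y k) < norm (u g) - \<delta> / 2})"
  have "finite BB" unfolding BB_def
    using fGS bad_finite[OF C eps, of "\<delta>/2"] dl by (intro finite_UN_I) auto
  then obtain N where N: "BB \<subseteq> {..<N}" using finite_nat_bounded by blast
  have "\<forall>k\<ge>N. \<forall>b. (\<forall>j\<le>m. \<bar>b j\<bar> \<le> 1) \<longrightarrow> (\<forall>t. norm (u b) - \<delta> \<le> norm (u b + t *\<^sub>R y k))"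
  proof (intro allI impI)
    fix k :: nat and b :: "nat \<Rightarrow> real" and t :: real assume kN: "N \<le> k" and bc: "\<forall>j\<le>m. \<bar>b j\<bar> \<le> 1"
    define g where "g = gr b"
    have gin: "g \<in> gr ` Cube" using bc by (auto simp: g_def Cube_def)
    have "k \<notin> BB" using N kN by auto
    then have kg: "norm (u g) - \<delta> / 2 \<le> norm (u g + t *\<^sub>R y k)"
      using gin unfolding BB_def by (auto simp: not_less)
    have diffb: "\<forall>j\<in>{..m}. \<bar>b j - g j\<bar> \<le> h"
      using bc floor_grid(1)[OF h0] by (auto simp: g_def gr_def)
    have "u b - u g = (\<Sum>j\<le>m. (b j - g j) *\<^sub>R y j)"
      by (simp add: u_def sum_subtractf[symmetric] scaleR_diff_left)
    then have ud: "norm (u b - u g) \<le> 2 * C * h"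
      using coef_sum_bound[OF C _ diffb] h0 by simp
    have e1: "u b = u g + (u b - u g)" by simp
    have "norm (u b) \<le> norm (u g) + norm (u b - u g)"
      by (subst e1) (rule norm_triangle_ineq)
    moreover have e2: "u g + t *\<^sub>R y k = (u b + t *\<^sub>R y k) - (u b - u g)" by simp
    have "norm (u g + t *\<^sub>R y k) \<le> norm (u b + t *\<^sub>R y k) + norm (u b - u g)"
      by (subst e2) (rule norm_triangle_ineq4)
    ultimately show "norm (u b) - \<delta> \<le> norm (u b + t *\<^sub>R y k)"
      using kg ud hC by linarith
  qed
  then show ?thesis unfolding u_def by blast
qed

lemma threshold_hom:
  fixes y :: "nat \<Rightarrow> 'a::real_normed_vector"
  assumes C: "\<And>A. finite A \<Longrightarrow> norm (sum y A) \<le> C"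
    and eps: "\<epsilon> > 0" "\<And>k. \<epsilon> \<le> norm (y k)"
    and dl: "\<delta> > 0"
  shows "\<exists>N. \<forall>k\<ge>N. \<forall>M b t. 0 \<le> M \<longrightarrow> (\<forall>j\<le>m. \<bar>b j\<bar> \<le> M) \<longrightarrow>
           norm (\<Sum>j\<le>m. b j *\<^sub>R y j) - \<delta> * M \<le> norm ((\<Sum>j\<le>m. b j *\<^sub>R y j) + t *\<^sub>R y k)"
proof -
  obtain N where N: "\<forall>k\<ge>N. \<forall>b. (\<forall>j\<le>m. \<bar>b j\<bar> \<le> 1) \<longrightarrow> (\<forall>t.
           norm (\<Sum>j\<le>m. b j *\<^sub>R y j) - \<delta> \<le> norm ((\<Sum>j\<le>m. b j *\<^sub>R y j) + t *\<^sub>R y k))"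
    using threshold[OF C eps dl, of m] by blast
  have "norm (\<Sum>j\<le>m. b j *\<^sub>R y j) - \<delta> * M \<le> norm ((\<Sum>j\<le>m. b j *\<^sub>R y j) + t *\<^sub>R y k)"
    if k: "k \<ge> N" and M: "0 \<le> M" and b: "\<forall>j\<le>m. \<bar>b j\<bar> \<le> M" for k M b t
  proof (cases "M = 0")
    case True
    then have "\<forall>j\<in>{..m}. b j = 0" using b by auto
    then have "(\<Sum>j\<le>m. b j *\<^sub>R y j) = 0" by simp
    then show ?thesis using True by simp
  next
    case False
    then have Mp: "M > 0" using M by simp
    define b' where "b' = (\<lambda>j. b j / M)"
    have b': "\<forall>j\<le>m. \<bar>b' j\<bar> \<le> 1"
    proof (intro allI impI)
      fix j assume "j \<le> m"
      then have bj: "\<bar>b j\<bar> \<le> M" using b by blast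
      have "\<bar>b' j\<bar> = \<bar>b j\<bar> / M" using Mp by (simp add: b'_def)
      also have "\<dots> \<le> M / M" using bj Mp by (intro divide_right_mono) auto
      also have "\<dots> = 1" using Mp by simp
      finally show "\<bar>b' j\<bar> \<le> 1" .
    qed
    have h: "norm (\<Sum>j\<le>m. b' j *\<^sub>R y j) - \<delta> \<le> norm ((\<Sum>j\<le>m. b' j *\<^sub>R y j) + (t / M) *\<^sub>R y k)"
      using N[rule_format, OF k, of b' "t / M"] b' by blast
    have e1: "(\<Sum>j\<le>m. b j *\<^sub>R y j) = M *\<^sub>R (\<Sum>j\<le>m. b' j *\<^sub>R y j)"
      using Mp by (simp add: b'_def scaleR_sum_right)
    have e2: "(\<Sum>j\<le>m. b j *\<^sub>R y j) + t *\<^sub>R y k = M *\<^sub>R ((\<Sum>j\<le>m. b' j *\<^sub>R y j) + (t / M) *\<^sub>R y k)"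
      using Mp by (simp add: e1 scaleR_add_right)
    have "M * (norm (\<Sum>j\<le>m. b' j *\<^sub>R y j) - \<delta>) \<le> M * norm ((\<Sum>j\<le>m. b' j *\<^sub>R y j) + (t / M) *\<^sub>R y k)"
      using h Mp by (intro mult_left_mono) auto
    then have ineq: "M * norm (\<Sum>j\<le>m. b' j *\<^sub>R y j) - M * \<delta> \<le> M * norm ((\<Sum>j\<le>m. b' j *\<^sub>R y j) + (t / M) *\<^sub>R y k)"
      by (simp add: right_diff_distrib)
    have n1: "norm (\<Sum>j\<le>m. b j *\<^sub>R y j) = M * norm (\<Sum>j\<le>m. b' j *\<^sub>R y j)"
      unfolding e1 using Mp by simp
    have n2: "norm ((\<Sum>j\<le>m. b j *\<^sub>R y j) + t *\<^sub>R y k) = M * norm ((\<Sum>j\<le>m. b' j *\<^sub>R y j) + (t / M) *\<^sub>R y k)"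
      unfolding e2 using Mp by simp
    show ?thesis using ineq unfolding n1 n2 by (simp add: mult.commute)
  qed
  then show ?thesis by blast
qed

fun subseq_of :: "(nat \<Rightarrow> nat) \<Rightarrow> nat \<Rightarrow> nat" where
  "subseq_of Nf 0 = 0"
| "subseq_of Nf (Suc n) = max (Suc (subseq_of Nf n)) (Nf (subseq_of Nf n))"

lemma subseq_of_mono: "strict_mono (subseq_of Nf)"
  unfolding strict_mono_Suc_iff by (simp add: less_max_iff_disj)

definition good_thr :: "(nat \<Rightarrow> 'a::real_normed_vector) \<Rightarrow> real \<Rightarrow> nat \<Rightarrow> nat \<Rightarrow> bool" where
  "good_thr y \<delta> m N \<longleftrightarrow> (\<forall>k\<ge>N. \<forall>M b t. 0 \<le> M \<longrightarrow> (\<forall>j\<le>m. \<bar>b j\<bar> \<le> M) \<longrightarrow>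
           norm (\<Sum>j\<le>m. b j *\<^sub>R y j) - \<delta> * M \<le> norm ((\<Sum>j\<le>m. b j *\<^sub>R y j) + t *\<^sub>R y k))"

lemma c0_bdd:
  assumes "a \<in> c0_space"
  shows "bdd_above (range (\<lambda>n. \<bar>a n\<bar>))"
proof -
  have "convergent a" using assms unfolding c0_space_def convergent_def by blast
  then have "Bseq a" by (rule convergent_imp_Bseq)
  then obtain K where "\<forall>n. norm (a n) \<le> K" by (rule BseqE) blast
  then show ?thesis by (intro bdd_aboveI2[where M=K]) auto
qed

lemma sup_norm_ge: "a \<in> c0_space \<Longrightarrow> \<bar>a n\<bar> \<le> sup_norm a"
  unfolding sup_norm_def by (rule cSUP_upper[OF UNIV_I c0_bdd])

lemma sup_norm_le: "(\<And>n. \<bar>a n\<bar> \<le> B) \<Longrightarrow> sup_norm a \<le> B"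
  unfolding sup_norm_def by (rule cSUP_least) auto

lemma sup_norm_nonneg: "a \<in> c0_space \<Longrightarrow> 0 \<le> sup_norm a"
  using sup_norm_ge[of a 0] by linarith

lemma BP_c0:
  fixes y :: "nat \<Rightarrow> 'a::banach"
  assumes C: "\<And>A. finite A \<Longrightarrow> norm (sum y A) \<le> C"
    and eps: "\<epsilon> > 0" "\<And>k. \<epsilon> \<le> norm (y k)"
  shows "contains_copy_of_c0 TYPE('a)"
proof -
  have C0: "0 \<le> C" using C[of "{}"] by simp
  define \<eta> where "\<eta> = \<epsilon> / 8"
  have eta: "\<eta> > 0" using eps by (simp add: \<eta>_def)
  have "\<forall>m. \<exists>N. good_thr y (\<eta> / 2 ^ Suc m) m N"
  proof
    fix m
    have "\<eta> / 2 ^ Suc m > 0" using eta by simp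
    from threshold_hom[OF C eps this, of m] show "\<exists>N. good_thr y (\<eta> / 2 ^ Suc m) m N"
      unfolding good_thr_def .
  qed
  then obtain Nf where Nf: "\<And>m. good_thr y (\<eta> / 2 ^ Suc m) m (Nf m)"
    using choice[of "\<lambda>m N. good_thr y (\<eta> / 2 ^ Suc m) m N"] by blast
  define r where "r = subseq_of Nf"
  have rm: "strict_mono r" unfolding r_def by (rule subseq_of_mono)
  have rinj: "inj r" using rm by (rule strict_mono_imp_inj_on)
  have rge: "n \<le> r n" for n using rm by (rule seq_suble)
  define z where "z = (\<lambda>i. y (r i))"
  have Cz: "norm (sum z A) \<le> C" if "finite A" for A
  proof -
    have "sum z A = sum y (r ` A)" unfolding z_def
      using rinj by (simp add: sum.reindex inj_on_subset[OF rinj])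
    then show ?thesis using C that by simp
  qed
  have epsz: "\<epsilon> \<le> norm (z k)" for k unfolding z_def by (rule eps(2))
  define S where "S = (\<lambda>(a::nat\<Rightarrow>real) n. \<Sum>i<n. a i *\<^sub>R z i)"
  have step: "norm (S a n) - M * \<eta> / 2 ^ n \<le> norm (S a (Suc n))"
    if M: "0 \<le> M" and aM: "\<forall>i. \<bar>a i\<bar> \<le> M" for a M n
  proof (cases n)
    case 0
    have h1: "0 \<le> M * \<eta>" using M eta by simp
    have h2: "norm (S a 0) = 0" by (simp add: S_def)
    have h3: "0 \<le> norm (S a (Suc 0))" by simp
    have h4: "0 \<le> M * \<eta> / 2 ^ 0" using h1 by simp
    show ?thesis unfolding 0 using h2 h3 h4 by linarith
  next
    case (Suc p)
    define b where "b = (\<lambda>j. if j \<in> range r then a (inv r j) else 0)"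
    have bri: "b (r i) = a i" for i using rinj by (simp add: b_def)
    have "S a (Suc p) = (\<Sum>i\<in>{..p}. b (r i) *\<^sub>R y (r i))"
      by (simp add: S_def z_def bri lessThan_Suc_atMost)
    also have "\<dots> = (\<Sum>j\<in>r ` {..p}. b j *\<^sub>R y j)"
      using inj_on_subset[OF rinj, of "{..p}"] by (simp add: sum.reindex)
    also have "\<dots> = (\<Sum>j\<le>r p. b j *\<^sub>R y j)"
    proof (rule sum.mono_neutral_left)
      show "r ` {..p} \<subseteq> {..r p}" using rm by (auto simp: strict_mono_less_eq)
      show "\<forall>j\<in>{..r p} - r ` {..p}. b j *\<^sub>R y j = 0"
      proof
        fix j assume j: "j \<in> {..r p} - r ` {..p}"
        have "j \<notin> range r"
        proof
          assume "j \<in> range r"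
          then obtain i where i: "j = r i" by blast
          then have "r i \<le> r p" using j by simp
          then have "i \<le> p" using rm by (simp add: strict_mono_less_eq)
          then show False using j i by auto
        qed
        then show "b j *\<^sub>R y j = 0" by (simp add: b_def)
      qed
    qed auto
    finally have rep: "S a (Suc p) = (\<Sum>j\<le>r p. b j *\<^sub>R y j)" .
    have bb: "\<forall>j\<le>r p. \<bar>b j\<bar> \<le> M" using aM M by (simp add: b_def)
    have kk: "Nf (r p) \<le> r (Suc p)" by (simp add: r_def)
    have g: "norm (\<Sum>j\<le>r p. b j *\<^sub>R y j) - (\<eta> / 2 ^ Suc (r p)) * M
             \<le> norm ((\<Sum>j\<le>r p. b j *\<^sub>R y j) + a (Suc p) *\<^sub>R y (r (Suc p)))"
      using Nf[of "r p"] kk M bb unfolding good_thr_def by blast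
    have SS: "S a (Suc (Suc p)) = S a (Suc p) + a (Suc p) *\<^sub>R y (r (Suc p))"
      by (simp add: S_def z_def)
    have "(2::real) ^ Suc p \<le> 2 ^ Suc (r p)" using rge[of p] by (intro power_increasing) auto
    then have "\<eta> / 2 ^ Suc (r p) \<le> \<eta> / 2 ^ Suc p" using eta by (intro divide_left_mono) auto
    then have "(\<eta> / 2 ^ Suc (r p)) * M \<le> (\<eta> / 2 ^ Suc p) * M" using M by (intro mult_right_mono) auto
    then show ?thesis using g unfolding Suc SS rep[symmetric] by (simp add: mult.commute)
  qed
  have tele: "norm (S a m) \<le> norm (S a (m + d)) + M * \<eta> * (2 / 2 ^ m - 2 / 2 ^ (m + d))"
    if M: "0 \<le> M" and aM: "\<forall>i. \<bar>a i\<bar> \<le> M" for a M m d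
  proof (induction d)
    case 0
    then show ?case by simp
  next
    case (Suc d)
    have "norm (S a (m + d)) - M * \<eta> / 2 ^ (m + d) \<le> norm (S a (Suc (m + d)))"
      by (rule step[OF M aM])
    moreover have "M * \<eta> * (2 / 2 ^ m - 2 / 2 ^ (m + d)) + M * \<eta> / 2 ^ (m + d)
                   = M * \<eta> * (2 / 2 ^ m - 2 / 2 ^ (m + Suc d))"
      by (simp add: field_simps)
    ultimately show ?case using Suc.IH by simp
  qed
  have proj: "norm (S a m) \<le> norm (S a n) + 2 * M * \<eta>"
    if M: "0 \<le> M" and aM: "\<forall>i. \<bar>a i\<bar> \<le> M" and mn: "m \<le> n" for a M m n
  proof -
    have n: "n = m + (n - m)" using mn by simp
    have "norm (S a m) \<le> norm (S a n) + M * \<eta> * (2 / 2 ^ m - 2 / 2 ^ (m + (n - m)))"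
      using tele[OF M aM, of m "n - m"] n by simp
    moreover have "2 / 2 ^ m - 2 / 2 ^ (m + (n - m)) \<le> (2::real)"
    proof -
      have "(2::real) / 2 ^ m \<le> 2" by (simp add: divide_le_eq)
      moreover have "(0::real) \<le> 2 / 2 ^ (m + (n - m))" by simp
      ultimately show ?thesis by linarith
    qed
    then have "M * \<eta> * (2 / 2 ^ m - 2 / 2 ^ (m + (n - m))) \<le> M * \<eta> * 2"
      using M eta by (intro mult_left_mono) auto
    ultimately show ?thesis by simp
  qed
  have lowerfin: "\<bar>a j\<bar> * \<epsilon> \<le> 2 * norm (S a n) + 4 * M * \<eta>"
    if M: "0 \<le> M" and aM: "\<forall>i. \<bar>a i\<bar> \<le> M" and jn: "j < n" for a M j n
  proof -
    have "\<bar>a j\<bar> * \<epsilon> \<le> \<bar>a j\<bar> * norm (z j)" using epsz by (intro mult_left_mono) auto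
    also have "\<dots> = norm (S a (Suc j) - S a j)" by (simp add: S_def)
    also have "\<dots> \<le> norm (S a (Suc j)) + norm (S a j)" by (rule norm_triangle_ineq4)
    also have "\<dots> \<le> (norm (S a n) + 2 * M * \<eta>) + (norm (S a n) + 2 * M * \<eta>)"
      using jn by (intro add_mono proj[OF M aM]) auto
    finally show ?thesis by simp
  qed
  have upperfin: "norm (S a n) \<le> 2 * C * M"
    if M: "0 \<le> M" and aM: "\<forall>i. \<bar>a i\<bar> \<le> M" for a M n
    unfolding S_def using aM M by (intro coef_sum_bound[OF Cz]) auto
  have summ: "summable (\<lambda>i. a i *\<^sub>R z i)" if a: "a \<in> c0_space" for a
  proof (unfold summable_Cauchy, intro allI impI)
    fix e :: real assume e: "e > 0"
    have e2: "e / (2 * C + 1) > 0" using e C0 by simp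
    from a have "a \<longlonglongrightarrow> 0" by (simp add: c0_space_def)
    then obtain N where N: "\<forall>i\<ge>N. norm (a i - 0) < e / (2 * C + 1)"
      using LIMSEQ_D[OF _ e2] by blast
    have "norm (\<Sum>i\<in>{m..<n}. a i *\<^sub>R z i) < e" if m: "m \<ge> N" for m n
    proof -
      have N': "\<forall>i\<in>{m..<n}. \<bar>a i\<bar> \<le> e / (2 * C + 1)"
      proof
        fix i assume "i \<in> {m..<n}"
        then have "N \<le> i" using m by simp
        then show "\<bar>a i\<bar> \<le> e / (2 * C + 1)" using N by (simp add: less_imp_le)
      qed
      have "norm (\<Sum>i\<in>{m..<n}. a i *\<^sub>R z i) \<le> 2 * C * (e / (2 * C + 1))"
        using N' e2 by (intro coef_sum_bound[OF Cz]) auto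
      also have "\<dots> < e" using e C0 by (simp add: field_simps)
      finally show ?thesis .
    qed
    then show "\<exists>N. \<forall>m\<ge>N. \<forall>n. norm (\<Sum>i = m..<n. a i *\<^sub>R z i) < e" by blast
  qed
  define T where "T = (\<lambda>a::nat\<Rightarrow>real. \<Sum>i. a i *\<^sub>R z i)"
  have lim: "(\<lambda>n. S a n) \<longlonglongrightarrow> T a" if "a \<in> c0_space" for a
    unfolding S_def T_def by (rule summable_LIMSEQ[OF summ[OF that]])
  have add: "T (\<lambda>n. a n + b n) = T a + T b" if "a \<in> c0_space" "b \<in> c0_space" for a b
    unfolding T_def using suminf_add[OF summ[OF that(1)] summ[OF that(2)]]
    by (simp add: scaleR_add_left)
  have scal: "T (\<lambda>n. c * a n) = c *\<^sub>R T a" if "a \<in> c0_space" for a c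
    unfolding T_def using suminf_scaleR_right[OF summ[OF that], of c] by simp
  have up: "norm (T a) \<le> 2 * C * sup_norm a" if a: "a \<in> c0_space" for a
  proof (rule LIMSEQ_le_const2[OF tendsto_norm[OF lim[OF a]]])
    show "\<exists>N. \<forall>n\<ge>N. norm (S a n) \<le> 2 * C * sup_norm a"
      using upperfin[OF sup_norm_nonneg[OF a]] sup_norm_ge[OF a] by blast
  qed
  have low: "\<epsilon> / 4 * sup_norm a \<le> norm (T a)" if a: "a \<in> c0_space" for a
  proof -
    define s where "s = sup_norm a"
    have s0: "0 \<le> s" using sup_norm_nonneg[OF a] by (simp add: s_def)
    have aM: "\<forall>i. \<bar>a i\<bar> \<le> s" using sup_norm_ge[OF a] by (simp add: s_def)
    have "\<bar>a j\<bar> * \<epsilon> \<le> 2 * norm (T a) + 4 * s * \<eta>" for j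
    proof (rule LIMSEQ_le_const)
      show "(\<lambda>n. 2 * norm (S a n) + 4 * s * \<eta>) \<longlonglongrightarrow> 2 * norm (T a) + 4 * s * \<eta>"
        by (intro tendsto_intros lim[OF a])
      show "\<exists>N. \<forall>n\<ge>N. \<bar>a j\<bar> * \<epsilon> \<le> 2 * norm (S a n) + 4 * s * \<eta>"
        using lowerfin[OF s0 aM] by (intro exI[of _ "Suc j"]) auto
    qed
    then have "\<bar>a j\<bar> \<le> (2 * norm (T a) + 4 * s * \<eta>) / \<epsilon>" for j
      using eps by (simp add: pos_le_divide_eq)
    then have "s \<le> (2 * norm (T a) + 4 * s * \<eta>) / \<epsilon>" unfolding s_def by (rule sup_norm_le)
    then have "s * \<epsilon> \<le> 2 * norm (T a) + 4 * s * \<eta>" using eps by (simp add: pos_le_divide_eq)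
    then show ?thesis unfolding s_def[symmetric] \<eta>_def by (simp add: field_simps)
  qed
  have "\<epsilon> / 4 > 0" using eps by simp
  then show ?thesis unfolding contains_copy_of_c0_def
    using add scal up low by (intro exI[of _ T] conjI ballI allI exI[of _ "\<epsilon> / 4"] exI[of _ "2 * C"]) auto
qed

fun used_blocks :: "(nat set \<Rightarrow> nat set) \<Rightarrow> nat \<Rightarrow> nat \<Rightarrow> nat set" where
  "used_blocks pk L 0 = {..<L}"
| "used_blocks pk L (Suc n) = used_blocks pk L n \<union> pk (used_blocks pk L n)"

lemma used_blocks_mono: "j \<le> n \<Longrightarrow> used_blocks pk L j \<subseteq> used_blocks pk L n"
proof (induction n)
  case 0 then show ?case by simp
next
  case (Suc n)
  then show ?case by (cases "j = Suc n") auto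
qed

lemma nuc_c0:
  fixes x :: "nat \<Rightarrow> 'a::banach"
  assumes nuc: "\<not> unconditionally_convergent x"
    and L: "\<And>F. finite F \<Longrightarrow> F \<subseteq> {L..} \<Longrightarrow> norm (sum x F) \<le> C"
  shows "contains_copy_of_c0 TYPE('a)"
proof -
  obtain p where p: "bij p" and ns: "\<not> summable (\<lambda>n. x (p n))"
    using nuc unfolding unconditionally_convergent_def by blast
  have injp: "inj p" using p bij_is_inj by blast
  from ns obtain e where e: "e > 0" and eN: "\<forall>N. \<exists>m\<ge>N. \<exists>n. e \<le> norm (\<Sum>i\<in>{m..<n}. x (p i))"
    unfolding summable_Cauchy by (auto simp: not_less)
  have ex: "\<exists>F. finite F \<and> F \<inter> G = {} \<and> e \<le> norm (sum x F)" if G: "finite G" for G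
  proof -
    have "finite (p -` G)" using G injp by (rule finite_vimageI)
    then obtain N where N: "p -` G \<subseteq> {..<N}" using finite_nat_bounded by blast
    obtain m n where m: "m \<ge> N" and mn: "e \<le> norm (\<Sum>i\<in>{m..<n}. x (p i))" using eN by blast
    have "p ` {m..<n} \<inter> G = {}" using N m by auto
    moreover have "sum x (p ` {m..<n}) = (\<Sum>i\<in>{m..<n}. x (p i))"
      using inj_on_subset[OF injp, of "{m..<n}"] by (simp add: sum.reindex)
    ultimately show ?thesis using mn by (intro exI[of _ "p ` {m..<n}"]) auto
  qed
  then have "\<forall>G. \<exists>F. finite G \<longrightarrow> finite F \<and> F \<inter> G = {} \<and> e \<le> norm (sum x F)" by blast
  then obtain pk where pk: "\<And>G. finite G \<Longrightarrow> finite (pk G) \<and> pk G \<inter> G = {} \<and> e \<le> norm (sum x (pk G))"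
    using choice[of "\<lambda>G F. finite G \<longrightarrow> finite F \<and> F \<inter> G = {} \<and> e \<le> norm (sum x F)"] by blast
  define U where "U = used_blocks pk L"
  have fU: "finite (U n)" for n
    by (induction n) (auto simp: U_def pk)
  define B where "B = (\<lambda>n. pk (U n))"
  have fB: "finite (B n)" for n using pk[OF fU] by (simp add: B_def)
  have BU: "B n \<inter> U n = {}" for n using pk[OF fU] by (simp add: B_def)
  have BUs: "B j \<subseteq> U n" if "j < n" for j n
  proof -
    have "B j \<subseteq> U (Suc j)" by (simp add: B_def U_def)
    also have "\<dots> \<subseteq> U n" unfolding U_def using that by (intro used_blocks_mono) simp
    finally show ?thesis .
  qed
  have disj: "B i \<inter> B j = {}" if "i \<noteq> j" for i j
  proof (cases "i < j")
    case True then show ?thesis using BUs[OF True] BU[of j] by blast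
  next
    case False then have "j < i" using that by simp
    then show ?thesis using BUs[of j i] BU[of i] by blast
  qed
  have BL: "B n \<subseteq> {L..}" for n
  proof -
    have "{..<L} \<subseteq> U n" unfolding U_def using used_blocks_mono[of 0 n pk L] by simp
    show ?thesis
    proof
      fix v assume v: "v \<in> B n"
      show "v \<in> {L..}"
      proof (rule ccontr)
        assume "v \<notin> {L..}"
        then have "v \<in> U n" using \<open>{..<L} \<subseteq> U n\<close> by auto
        then show False using v BU[of n] by blast
      qed
    qed
  qed
  define y where "y = (\<lambda>n. sum x (B n))"
  have Cy: "norm (sum y A) \<le> C" if A: "finite A" for A
  proof -
    have "sum y A = sum x (\<Union>(B ` A))" unfolding y_def
      using A fB disj by (subst sum.UNION_disjoint) auto
    moreover have "finite (\<Union>(B ` A))" using A fB by auto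
    moreover have "\<Union>(B ` A) \<subseteq> {L..}" using BL by auto
    ultimately show ?thesis using L by simp
  qed
  have ey: "e \<le> norm (y n)" for n using pk[OF fU] by (simp add: y_def B_def)
  show ?thesis by (rule BP_c0[OF Cy e ey])
qed

definition cyl :: "(nat \<Rightarrow> nat) \<Rightarrow> nat \<Rightarrow> (nat \<Rightarrow> nat) set" where
  "cyl s n = {f. \<forall>i<n. f i = s i}"

lemma topspace_baire [simp]: "topspace baire_space = UNIV"
  by (simp add: baire_space_def)

lemma cyl_PiE: "cyl s n = PiE UNIV (\<lambda>i. if i < n then {s i} else UNIV)"
proof (intro set_eqI iffI)
  fix f assume "f \<in> cyl s n" then show "f \<in> PiE UNIV (\<lambda>i. if i < n then {s i} else UNIV)"
    by (auto simp: cyl_def PiE_iff)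
next
  fix f assume h: "f \<in> PiE UNIV (\<lambda>i. if i < n then {s i} else UNIV)"
  have "f i = s i" if "i < n" for i
  proof -
    from h have "f i \<in> (if i < n then {s i} else UNIV)" by (simp add: PiE_iff)
    then show ?thesis using that by simp
  qed
  then show "f \<in> cyl s n" by (simp add: cyl_def)
qed

lemma openin_cyl: "openin baire_space (cyl s n)"
proof -
  have "finite {i \<in> UNIV. (if i < n then {s i} else UNIV) \<noteq> topspace (discrete_topology (UNIV::nat set))}"
    by (rule finite_subset[of _ "{..<n}"]) auto
  then show ?thesis unfolding cyl_PiE baire_space_def
    by (subst openin_PiE_gen) auto
qed

lemma self_in_cyl [simp]: "s \<in> cyl s n"
  by (simp add: cyl_def)

lemma openin_baire_cyl:
  assumes "openin baire_space V" "s \<in> V"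
  shows "\<exists>n. cyl s n \<subseteq> V"
proof -
  obtain U where fin: "finite {i \<in> UNIV. U i \<noteq> topspace (discrete_topology (UNIV::nat set))}"
    and sU: "s \<in> Pi\<^sub>E UNIV U" and UV: "Pi\<^sub>E UNIV U \<subseteq> V"
    using assms unfolding baire_space_def openin_product_topology_alt by blast
  obtain n where n: "{i \<in> UNIV. U i \<noteq> topspace (discrete_topology (UNIV::nat set))} \<subseteq> {..<n}"
    using finite_nat_bounded[OF fin] by blast
  have "cyl s n \<subseteq> Pi\<^sub>E UNIV U"
  proof
    fix f assume f: "f \<in> cyl s n"
    show "f \<in> Pi\<^sub>E UNIV U"
    proof (rule PiE_I)
      fix i :: nat
      show "f i \<in> U i"
      proof (cases "i < n")
        case True then show ?thesis using f sU by (auto simp: cyl_def PiE_iff)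
      next
        case False then have "U i = UNIV" using n by auto
        then show ?thesis by simp
      qed
    qed simp
  qed
  then show ?thesis using UV by blast
qed

lemma openin_sub_cyl:
  assumes "openin (subtopology baire_space D) U" "s \<in> U"
  shows "\<exists>n. cyl s n \<inter> D \<subseteq> U"
proof -
  obtain V where V: "openin baire_space V" "U = V \<inter> D" using assms(1) unfolding openin_subtopology by blast
  have "s \<in> V" using V assms(2) by blast
  then obtain n where "cyl s n \<subseteq> V" using openin_baire_cyl[OF V(1)] by blast
  then show ?thesis using V by blast
qed

lemma openin_sub_cyl2: "openin (subtopology baire_space D) (cyl s n \<inter> D)"
  unfolding openin_subtopology by (intro exI[of _ "cyl s n"]) (simp add: openin_cyl)

lemma closure_sub_cyl:
  assumes "d \<in> (subtopology baire_space D) closure_of A"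
  shows "d \<in> D \<and> (\<forall>n. \<exists>a\<in>A. a \<in> cyl d n)"
proof -
  have dD: "d \<in> D" and H: "\<forall>T. d \<in> T \<and> openin (subtopology baire_space D) T \<longrightarrow> (\<exists>y. y \<in> A \<and> y \<in> T)"
    using assms unfolding in_closure_of by auto
  have "\<exists>a\<in>A. a \<in> cyl d n" for n
  proof -
    have "d \<in> cyl d n \<inter> D" using dD by simp
    then obtain a where "a \<in> A" "a \<in> cyl d n \<inter> D" using H openin_sub_cyl2[of D d n] by blast
    then show ?thesis by blast
  qed
  then show ?thesis using dD by blast
qed

lemma interior_sub_cyl:
  assumes "d \<in> (subtopology baire_space D) interior_of B"
  shows "d \<in> D \<and> (\<exists>n. cyl d n \<inter> D \<subseteq> B)"
proof -
  obtain U where U: "openin (subtopology baire_space D) U" "d \<in> U" "U \<subseteq> B"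
    using assms unfolding interior_of_def by blast
  have "U \<subseteq> D" using openin_subset[OF U(1)] by simp
  then have "d \<in> D" using U(2) by blast
  then show ?thesis using openin_sub_cyl[OF U(1,2)] U(3) by blast
qed

definition ext_prop :: "(nat \<Rightarrow> nat) set \<Rightarrow> bool" where
  "ext_prop D \<longleftrightarrow> (\<forall>s\<in>D. \<forall>k. \<exists>L. \<forall>F. finite F \<longrightarrow> F \<subseteq> {L..} \<longrightarrow>
     (\<exists>d\<in>D. (\<forall>i<k. d i = s i) \<and> inj_on d {k..<k + card F} \<and> d ` {k..<k + card F} = F))"

lemma nd_bdd:
  fixes x :: "nat \<Rightarrow> 'a::real_normed_vector"
  assumes ext: "ext_prop D"
    and noC: "\<And>L C. \<exists>F. finite F \<and> F \<subseteq> {L..} \<and> C < norm (sum x F)"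
  shows "nowhere_dense_in (subtopology baire_space D) {d\<in>D. \<forall>n. norm (\<Sum>i<n. x (d i)) \<le> M}"
proof -
  define A where "A = {d\<in>D. \<forall>n. norm (\<Sum>i<n. x (d i)) \<le> M}"
  define X where "X = subtopology baire_space D"
  have "X interior_of (X closure_of A) = {}"
  proof (rule ccontr)
    assume "X interior_of (X closure_of A) \<noteq> {}"
    then obtain s where s: "s \<in> X interior_of (X closure_of A)" by blast
    obtain k where sD: "s \<in> D" and k: "cyl s k \<inter> D \<subseteq> X closure_of A"
      using interior_sub_cyl[OF s[unfolded X_def]] unfolding X_def by blast
    have bnd: "norm (\<Sum>i<n. x (d i)) \<le> M" if d: "d \<in> cyl s k \<inter> D" for d n
    proof -
      have "d \<in> X closure_of A" using d k by blast
      then obtain a where a: "a \<in> A" "a \<in> cyl d n" using closure_sub_cyl[of d D A] unfolding X_def by blast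
      have "(\<Sum>i<n. x (d i)) = (\<Sum>i<n. x (a i))" using a(2) by (intro sum.cong) (auto simp: cyl_def)
      then show ?thesis using a(1) by (simp add: A_def)
    qed
    obtain L where L: "\<forall>F. finite F \<longrightarrow> F \<subseteq> {L..} \<longrightarrow>
      (\<exists>d\<in>D. (\<forall>i<k. d i = s i) \<and> inj_on d {k..<k + card F} \<and> d ` {k..<k + card F} = F)"
      using spec[OF bspec[OF ext[unfolded ext_prop_def] sD], of k] by (elim exE) blast
    obtain F where F: "finite F" "F \<subseteq> {L..}" "2 * M < norm (sum x F)" using noC[of L "2 * M"] by blast
    obtain d where dD: "d \<in> D" and dk: "\<forall>i<k. d i = s i" and dinj: "inj_on d {k..<k + card F}"
      and dF: "d ` {k..<k + card F} = F"
      using L[rule_format, OF F(1) F(2)] by blast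
    have dc: "d \<in> cyl s k \<inter> D" using dD dk by (simp add: cyl_def)
    have "sum x (d ` {k..<k + card F}) = (\<Sum>i\<in>{k..<k + card F}. x (d i))"
      using dinj by (simp add: sum.reindex)
    then have "sum x F = (\<Sum>i\<in>{k..<k + card F}. x (d i))" using dF by simp
    also have "\<dots> = (\<Sum>i<k + card F. x (d i)) - (\<Sum>i<k. x (d i))"
      using sum.atLeastLessThan_concat[of 0 k "k + card F" "\<lambda>i. x (d i)"]
      by (simp add: atLeast0LessThan eq_diff_eq add.commute)
    finally have eqF: "sum x F = (\<Sum>i<k + card F. x (d i)) - (\<Sum>i<k. x (d i))" .
    have "norm (sum x F) \<le> norm (\<Sum>i<k + card F. x (d i)) + norm (\<Sum>i<k. x (d i))"
      unfolding eqF by (rule norm_triangle_ineq4)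
    also have "\<dots> \<le> M + M" using bnd[OF dc] by (intro add_mono) auto
    finally show False using F(3) by simp
  qed
  moreover have "A \<subseteq> topspace X" by (auto simp: A_def X_def)
  ultimately show ?thesis unfolding nowhere_dense_in_def A_def X_def by blast
qed

lemma meager_bdd:
  fixes x :: "nat \<Rightarrow> 'a::real_normed_vector"
  assumes ext: "ext_prop D"
    and noC: "\<And>L C. \<exists>F. finite F \<and> F \<subseteq> {L..} \<and> C < norm (sum x F)"
  shows "meager_in (subtopology baire_space D) {d\<in>D. bounded (range (\<lambda>n. \<Sum>i<n. x (d i)))}"
proof -
  define \<F> where "\<F> = range (\<lambda>M::nat. {d\<in>D. \<forall>n. norm (\<Sum>i<n. x (d i)) \<le> real M})"
  have "countable \<F>" unfolding \<F>_def by simp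
  moreover have "\<forall>N\<in>\<F>. nowhere_dense_in (subtopology baire_space D) N"
    unfolding \<F>_def using nd_bdd[OF ext noC] by auto
  moreover have "{d\<in>D. bounded (range (\<lambda>n. \<Sum>i<n. x (d i)))} \<subseteq> \<Union>\<F>"
  proof
    fix d assume "d \<in> {d\<in>D. bounded (range (\<lambda>n. \<Sum>i<n. x (d i)))}"
    then have dD: "d \<in> D" and b: "bounded (range (\<lambda>n. \<Sum>i<n. x (d i)))" by auto
    obtain a where a: "\<forall>v\<in>range (\<lambda>n. \<Sum>i<n. x (d i)). norm v \<le> a" using b unfolding bounded_iff by blast
    have "a \<le> real (nat \<lceil>a\<rceil>)" by linarith
    have "norm (\<Sum>i<n. x (d i)) \<le> real (nat \<lceil>a\<rceil>)" for n
    proof -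
      have "(\<Sum>i<n. x (d i)) \<in> range (\<lambda>n. \<Sum>i<n. x (d i))" by blast
      then have "norm (\<Sum>i<n. x (d i)) \<le> a" using a by blast
      then show ?thesis using \<open>a \<le> real (nat \<lceil>a\<rceil>)\<close> by linarith
    qed
    then have "\<forall>n. norm (\<Sum>i<n. x (d i)) \<le> real (nat \<lceil>a\<rceil>)" by blast
    then have "d \<in> {d\<in>D. \<forall>n. norm (\<Sum>i<n. x (d i)) \<le> real (nat \<lceil>a\<rceil>)}" using dD by blast
    then show "d \<in> \<Union>\<F>" unfolding \<F>_def by blast
  qed
  moreover have "{d\<in>D. bounded (range (\<lambda>n. \<Sum>i<n. x (d i)))} \<subseteq> topspace (subtopology baire_space D)"
    by auto
  ultimately show ?thesis unfolding meager_in_def by (intro conjI exI[of _ \<F>]) auto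
qed

lemma shift_bij:
  fixes c k :: nat
  assumes f: "bij_betw f {..<c} F"
    and d: "\<And>i. k \<le> i \<Longrightarrow> i < k + c \<Longrightarrow> d i = f (i - k)"
  shows "inj_on d {k..<k + c} \<and> d ` {k..<k + c} = F"
proof
  have injf: "inj_on f {..<c}" using f by (rule bij_betw_imp_inj_on)
  have imf: "f ` {..<c} = F" using f by (rule bij_betw_imp_surj_on)
  show "inj_on d {k..<k + c}"
  proof (rule inj_onI)
    fix i j assume i: "i \<in> {k..<k + c}" and j: "j \<in> {k..<k + c}" and e: "d i = d j"
    then have "f (i - k) = f (j - k)" using d by simp
    moreover have "i - k \<in> {..<c}"
    proof -
      have "k \<le> i" "i < k + c" using i by auto
      then have "i - k < c" by linarith
      then show ?thesis by simp
    qed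
    moreover have "j - k \<in> {..<c}"
    proof -
      have "k \<le> j" "j < k + c" using j by auto
      then have "j - k < c" by linarith
      then show ?thesis by simp
    qed
    ultimately have "i - k = j - k" using injf by (metis inj_onD)
    moreover have "k \<le> i" "k \<le> j" using i j by auto
    ultimately show "i = j" by linarith
  qed
  show "d ` {k..<k + c} = F"
  proof
    show "d ` {k..<k + c} \<subseteq> F"
    proof
      fix v assume "v \<in> d ` {k..<k + c}"
      then obtain i where i: "i \<in> {k..<k + c}" "v = d i" by blast
      then have "v = f (i - k)" using d by simp
      moreover have "i - k \<in> {..<c}" using i by auto
      ultimately show "v \<in> F" using imf by blast
    qed
    show "F \<subseteq> d ` {k..<k + c}"
    proof
      fix v assume "v \<in> F"
      then obtain j where j: "j < c" "v = f j" using imf by auto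
      then have "d (k + j) = v" using d[of "k + j"] by simp
      moreover have "k + j \<in> {k..<k + c}" using j by simp
      ultimately show "v \<in> d ` {k..<k + c}" by blast
    qed
  qed
qed

lemma elem_le_sum_nat: "finite (F::nat set) \<Longrightarrow> v \<in> F \<Longrightarrow> v \<le> \<Sum>F"
  by (rule member_le_sum) auto

lemma ext_incr: "ext_prop incr_seqs"
  unfolding ext_prop_def
proof (intro ballI allI)
  fix s k assume s: "s \<in> incr_seqs"
  show "\<exists>L. \<forall>F. finite F \<longrightarrow> F \<subseteq> {L..} \<longrightarrow>
     (\<exists>d\<in>incr_seqs. (\<forall>i<k. d i = s i) \<and> inj_on d {k..<k + card F} \<and> d ` {k..<k + card F} = F)"
  proof (intro exI[of _ "s k"] allI impI)
  fix F assume fF: "finite F" and FL: "F \<subseteq> {s k..}"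
  have sm: "strict_mono s" using s by (simp add: incr_seqs_def)
  define c where "c = card F"
  define f where "f = enumerate F"
  define B where "B = s k + \<Sum>F"
  define d where "d = (\<lambda>i. if i < k then s i else if i < k + c then f (i - k) else B + i)"
  have fb: "bij_betw f {..<c} F" unfolding f_def c_def by (rule finite_bij_enumerate[OF fF])
  have fin: "f j \<in> F" if "j < c" for j using fb that by (auto dest: bij_betw_apply)
  have fmono: "f i < f j" if "i < j" "j < c" for i j
    unfolding f_def using finite_enumerate_mono[OF that(1) fF] that(2) by (simp add: c_def)
  have fge: "s k \<le> f j" if "j < c" for j using fin[OF that] FL by auto
  have fle: "f j \<le> \<Sum>F" if "j < c" for j using fin[OF that] fF elem_le_sum_nat by blast
  have "d i < d (Suc i)" for i
  proof -
    consider "Suc i < k" | "Suc i = k" | "k \<le> i" "Suc i < k + c" | "k \<le> i" "Suc i = k + c" | "k + c \<le> i"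
      by linarith
    then show ?thesis
    proof cases
      case 1 then show ?thesis using sm by (simp add: d_def strict_mono_Suc_iff)
    next
      case 2
      have "s i < s k" using sm 2 by (simp add: strict_mono_def)
      moreover have "s k \<le> d k"
        using fge[of 0] by (cases "0 < c") (auto simp: d_def B_def)
      ultimately show ?thesis using 2 by (simp add: d_def)
    next
      case 3
      then have "f (i - k) < f (Suc i - k)" using fmono by simp
      then show ?thesis using 3 by (simp add: d_def)
    next
      case 4
      then have "f (i - k) \<le> \<Sum>F" using fle by simp
      then show ?thesis using 4 by (simp add: d_def B_def)
    next
      case 5 then show ?thesis by (simp add: d_def)
    qed
  qed
  then have dS: "d \<in> incr_seqs" by (simp add: incr_seqs_def strict_mono_Suc_iff)
  have "inj_on d {k..<k + c} \<and> d ` {k..<k + c} = F"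
    by (rule shift_bij[OF fb]) (simp add: d_def)
  then show "\<exists>d\<in>incr_seqs. (\<forall>i<k. d i = s i) \<and> inj_on d {k..<k + card F} \<and> d ` {k..<k + card F} = F"
    using dS by (intro bexI[of _ d]) (auto simp: d_def c_def)
  qed
qed

lemma ext_perm: "ext_prop perms"
  unfolding ext_prop_def
proof (intro ballI allI)
  fix p k assume p: "p \<in> perms"
  have bp: "bij p" using p by (simp add: perms_def)
  have injp: "inj p" using bp by (simp add: bij_def)
  define L where "L = Suc (\<Sum>i<k. p i)"
  show "\<exists>L. \<forall>F. finite F \<longrightarrow> F \<subseteq> {L..} \<longrightarrow>
     (\<exists>d\<in>perms. (\<forall>i<k. d i = p i) \<and> inj_on d {k..<k + card F} \<and> d ` {k..<k + card F} = F)"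
  proof (intro exI[of _ L] allI impI)
    fix F assume fF: "finite F" and FL: "F \<subseteq> {L..}"
    define A where "A = p ` {..<k}"
    have AF: "A \<inter> F = {}"
    proof -
      have "p i < L" if "i < k" for i
      proof -
        have "p i \<le> (\<Sum>i<k. p i)" using that by (intro member_le_sum) auto
        then show ?thesis by (simp add: L_def)
      qed
      then show ?thesis using FL unfolding A_def by (force simp: subset_iff)
    qed
    define R where "R = UNIV - (A \<union> F)"
    have fAF: "finite (A \<union> F)" using fF by (simp add: A_def)
    have infR: "infinite R" unfolding R_def using fAF by (simp add: Diff_infinite_finite)
    define c where "c = card F"
    define f where "f = enumerate F"
    define e where "e = enumerate R"
    define d where "d = (\<lambda>i. if i < k then p i else if i < k + c then f (i - k) else e (i - (k + c)))"
    have fb: "bij_betw f {..<c} F" unfolding f_def c_def by (rule finite_bij_enumerate[OF fF])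
    have eb: "bij_betw e UNIV R" unfolding e_def by (rule bij_enumerate[OF infR])
    have injf: "inj_on f {..<c}" using fb by (rule bij_betw_imp_inj_on)
    have imf: "f ` {..<c} = F" using fb by (rule bij_betw_imp_surj_on)
    have inje: "inj e" using eb by (rule bij_betw_imp_inj_on)
    have ime: "range e = R" using eb by (rule bij_betw_imp_surj_on)
    have r1: "d i \<in> A" if "i < k" for i using that by (simp add: d_def A_def)
    have r2: "d i \<in> F" if "k \<le> i" "i < k + c" for i
    proof -
      have "i - k < c" using that by linarith
      then show ?thesis using that imf by (auto simp: d_def)
    qed
    have r3: "d i \<in> R" if "k + c \<le> i" for i using that ime by (auto simp: d_def)
    have RA: "R \<inter> A = {}" "R \<inter> F = {}" by (auto simp: R_def)
    have "inj d"
    proof (rule injI)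
      fix i j assume dij: "d i = d j"
      consider "i < k" | "k \<le> i" "i < k + c" | "k + c \<le> i" by linarith
      then show "i = j"
      proof cases
        case 1
        then have "d i \<in> A" by (rule r1)
        then have "j < k" using dij r2[of j] r3[of j] AF RA by (cases "j < k"; cases "j < k + c") auto
        then show ?thesis using 1 dij injp by (simp add: d_def inj_eq)
      next
        case 2
        then have "d i \<in> F" by (rule r2)
        then have j: "k \<le> j" "j < k + c" using dij r1[of j] r3[of j] AF RA
          by (cases "j < k"; cases "j < k + c"; auto)+
        have "f (i - k) = f (j - k)" using 2 j dij by (simp add: d_def)
        moreover have "i - k \<in> {..<c}" "j - k \<in> {..<c}" using 2 j by auto
        ultimately have "i - k = j - k" using injf by (metis inj_onD)
        then show ?thesis using 2 j by linarith
      next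
        case 3
        then have "d i \<in> R" by (rule r3)
        then have j: "k + c \<le> j" using dij r1[of j] r2[of j] AF RA by (cases "j < k"; cases "j < k + c") auto
        have "e (i - (k + c)) = e (j - (k + c))" using 3 j dij by (simp add: d_def)
        then have "i - (k + c) = j - (k + c)" using inje by (simp add: inj_eq)
        then show ?thesis using 3 j by linarith
      qed
    qed
    moreover have "surj d"
    proof (unfold surj_def, intro allI)
      fix v
      show "\<exists>i. v = d i"
      proof (cases "v \<in> A")
        case True
        then obtain i where "i < k" "v = p i" by (auto simp: A_def)
        then show ?thesis by (intro exI[of _ i]) (simp add: d_def)
      next
        case False
        show ?thesis
        proof (cases "v \<in> F")
          case True
          then obtain j where j: "j < c" "v = f j" using imf by auto
          then show ?thesis by (intro exI[of _ "k + j"]) (simp add: d_def)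
        next
          case False
          then have "v \<in> R" using \<open>v \<notin> A\<close> by (simp add: R_def)
          then obtain j where "v = e j" using ime by auto
          then show ?thesis by (intro exI[of _ "k + c + j"]) (simp add: d_def)
        qed
      qed
    qed
    ultimately have dP: "d \<in> perms" by (simp add: perms_def bij_def)
    have "inj_on d {k..<k + c} \<and> d ` {k..<k + c} = F"
      by (rule shift_bij[OF fb]) (simp add: d_def)
    then show "\<exists>d\<in>perms. (\<forall>i<k. d i = p i) \<and> inj_on d {k..<k + card F} \<and> d ` {k..<k + card F} = F"
      using dP by (intro bexI[of _ d]) (auto simp: d_def c_def)
  qed
qed

lemma incr_closed: "closedin baire_space incr_seqs"
proof -
  have "baire_space closure_of incr_seqs \<subseteq> incr_seqs"
  proof
    fix s assume s: "s \<in> baire_space closure_of incr_seqs"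
    have H: "\<forall>T. s \<in> T \<and> openin baire_space T \<longrightarrow> (\<exists>y. y \<in> incr_seqs \<and> y \<in> T)"
      using s unfolding in_closure_of by blast
    have "s n < s (Suc n)" for n
    proof -
      obtain a where a: "a \<in> incr_seqs" "a \<in> cyl s (Suc (Suc n))"
        using H openin_cyl[of s "Suc (Suc n)"] self_in_cyl[of s "Suc (Suc n)"] by blast
      have "a n < a (Suc n)" using a(1) by (simp add: incr_seqs_def strict_mono_Suc_iff)
      moreover have "a n = s n" "a (Suc n) = s (Suc n)" using a(2) by (auto simp: cyl_def)
      ultimately show ?thesis by simp
    qed
    then show "s \<in> incr_seqs" by (simp add: incr_seqs_def strict_mono_Suc_iff)
  qed
  then show ?thesis using closure_of_subset_eq[of incr_seqs baire_space] by simp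
qed

lemma cm_baire: "completely_metrizable_space baire_space"
  unfolding baire_space_def completely_metrizable_space_product_topology
  by (auto intro: completely_metrizable_space_discrete_topology)

lemma incr_not_meager: "\<not> meager_in (subtopology baire_space incr_seqs) incr_seqs"
proof
  define X where "X = subtopology baire_space incr_seqs"
  assume "meager_in (subtopology baire_space incr_seqs) incr_seqs"
  then obtain \<F> where cF: "countable \<F>" and nd: "\<forall>N\<in>\<F>. nowhere_dense_in X N" and cov: "incr_seqs \<subseteq> \<Union>\<F>"
    unfolding meager_in_def X_def by blast
  have cmX: "completely_metrizable_space X"
    unfolding X_def by (rule completely_metrizable_space_closedin[OF cm_baire incr_closed])
  define \<G> where "\<G> = (\<lambda>N. X closure_of N) ` \<F>"
  have "X interior_of \<Union>\<G> = {}"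
  proof (rule Baire_category_alt)
    show "completely_metrizable_space X \<or> locally_compact_space X \<and> regular_space X" using cmX by simp
    show "countable \<G>" unfolding \<G>_def using cF by simp
    fix T assume "T \<in> \<G>"
    then obtain N where N: "N \<in> \<F>" "T = X closure_of N" unfolding \<G>_def by blast
    then show "closedin X T \<and> X interior_of T = {}"
      using nd unfolding nowhere_dense_in_def by simp
  qed
  moreover have "topspace X \<subseteq> \<Union>\<G>"
  proof
    fix s assume s: "s \<in> topspace X"
    then have "s \<in> incr_seqs" by (simp add: X_def)
    then obtain N where N: "N \<in> \<F>" "s \<in> N" using cov by blast
    have "N \<subseteq> topspace X" using nd N(1) unfolding nowhere_dense_in_def by blast
    then have "s \<in> X closure_of N" using N(2) closure_of_subset by blast
    then show "s \<in> \<Union>\<G>" using N(1) unfolding \<G>_def by blast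
  qed
  then have "X interior_of topspace X \<subseteq> X interior_of \<Union>\<G>" by (rule interior_of_mono)
  moreover have "id \<in> topspace X" by (simp add: X_def incr_seqs_def strict_mono_def)
  ultimately show False by simp
qed

lemma ind_c0: "finite B \<Longrightarrow> (\<lambda>j. if j \<in> B then 1 else 0 :: real) \<in> c0_space"
proof -
  assume "finite B"
  then obtain N where N: "B \<subseteq> {..<N}" using finite_nat_bounded by blast
  have "eventually (\<lambda>j. (if j \<in> B then 1 else 0 :: real) = 0) sequentially"
    unfolding eventually_sequentially using N by (intro exI[of _ N]) auto
  then show ?thesis unfolding c0_space_def by (simp add: tendsto_eventually)
qed

lemma c0_direction:
  assumes "contains_copy_of_c0 TYPE('a::banach)"
  shows "\<exists>x :: nat \<Rightarrow> 'a. \<not> unconditionally_convergent x \<and>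
           \<not> meager_in (subtopology baire_space incr_seqs)
              {s \<in> incr_seqs. bounded (range (\<lambda>n. \<Sum>i<n. x (s i)))}"
proof -
  obtain T :: "(nat \<Rightarrow> real) \<Rightarrow> 'a" and m M where
    add: "\<forall>a\<in>c0_space. \<forall>b\<in>c0_space. T (\<lambda>n. a n + b n) = T a + T b"
    and scal: "\<forall>c. \<forall>a\<in>c0_space. T (\<lambda>n. c * a n) = c *\<^sub>R T a"
    and m: "0 < m" and bd: "\<forall>a\<in>c0_space. m * sup_norm a \<le> norm (T a) \<and> norm (T a) \<le> M * sup_norm a"
    using assms unfolding contains_copy_of_c0_def by blast
  define ind where "ind = (\<lambda>(B::nat set) (j::nat). if j \<in> B then 1 else 0 :: real)"
  define x where "x = (\<lambda>n. T (ind {n}))"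
  have z0: "(\<lambda>j. 0::real) \<in> c0_space" unfolding c0_space_def by simp
  have "T (\<lambda>n. (0::real) * (\<lambda>j. 0::real) n) = (0::real) *\<^sub>R T (\<lambda>j. 0)"
    using bspec[OF spec[OF scal, of 0] z0] .
  then have T0: "T (\<lambda>j. 0) = 0" by simp
  have Tsum: "T (ind B) = (\<Sum>n\<in>B. x n)" if "finite B" for B
    using that
  proof (induction B rule: finite_induct)
    case empty
    then show ?case using T0 by (simp add: ind_def)
  next
    case (insert b B)
    have "ind (insert b B) = (\<lambda>j. ind {b} j + ind B j)" using insert.hyps by (auto simp: ind_def)
    then have "T (ind (insert b B)) = T (ind {b}) + T (ind B)"
      using add ind_c0[of "{b}"] ind_c0[OF insert.hyps(1)] unfolding ind_def by simp
    then show ?case using insert by (simp add: x_def)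
  qed
  have snd: "sup_norm (ind B) \<le> 1" for B by (rule sup_norm_le) (simp add: ind_def)
  have bnd: "norm (\<Sum>n\<in>B. x n) \<le> \<bar>M\<bar>" if "finite B" for B
  proof -
    have c0: "ind B \<in> c0_space" using ind_c0[OF that] by (simp add: ind_def)
    have s0: "0 \<le> sup_norm (ind B)" by (rule sup_norm_nonneg[OF c0])
    have "norm (\<Sum>n\<in>B. x n) = norm (T (ind B))" using Tsum[OF that] by simp
    also have "\<dots> \<le> M * sup_norm (ind B)" using bspec[OF bd c0] by (rule conjunct2)
    also have "\<dots> \<le> \<bar>M\<bar> * sup_norm (ind B)" using s0 by (intro mult_right_mono) auto
    also have "\<dots> \<le> \<bar>M\<bar> * 1" using snd[of B] by (intro mult_left_mono) auto
    finally show ?thesis by simp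
  qed
  have E: "{s \<in> incr_seqs. bounded (range (\<lambda>n. \<Sum>i<n. x (s i)))} = incr_seqs"
  proof -
    have "bounded (range (\<lambda>n. \<Sum>i<n. x (s i)))" if s: "s \<in> incr_seqs" for s
    proof -
      have inj: "inj s" using s by (simp add: incr_seqs_def strict_mono_imp_inj_on)
      have "norm (\<Sum>i<n. x (s i)) \<le> \<bar>M\<bar>" for n
      proof -
        have "(\<Sum>i<n. x (s i)) = (\<Sum>j\<in>s ` {..<n}. x j)"
          using inj_on_subset[OF inj, of "{..<n}"] by (simp add: sum.reindex)
        then show ?thesis using bnd[of "s ` {..<n}"] by simp
      qed
      then show ?thesis unfolding bounded_iff by blast
    qed
    then show ?thesis by blast
  qed
  have xlow: "m \<le> norm (x n)" for n
  proof -
    have c0: "ind {n} \<in> c0_space" using ind_c0[of "{n}"] by (simp add: ind_def)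
    have "1 \<le> sup_norm (ind {n})" using sup_norm_ge[OF c0, of n] by (simp add: ind_def)
    then have "m \<le> m * sup_norm (ind {n})" using m by simp
    also have "\<dots> \<le> norm (x n)" using bspec[OF bd c0] unfolding x_def by (rule conjunct1)
    finally show ?thesis .
  qed
  have nuc: "\<not> unconditionally_convergent x"
  proof
    assume "unconditionally_convergent x"
    then have "summable (\<lambda>n. x (id n))" unfolding unconditionally_convergent_def
      using bij_id by blast
    then have "x \<longlonglongrightarrow> 0" using summable_LIMSEQ_zero by simp
    then obtain N where "\<forall>n\<ge>N. norm (x n - 0) < m" using LIMSEQ_D[OF _ m] by blast
    then have "norm (x N) < m" by simp
    then show False using xlow[of N] by simp
  qed
  show ?thesis using nuc E incr_not_meager by (intro exI[of _ x]) simp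
qed

theorem mainTheorem5:
  shows "\<not> contains_copy_of_c0 TYPE('a::banach) \<longleftrightarrow>
    (\<forall>x :: nat \<Rightarrow> 'a. \<not> unconditionally_convergent x \<longrightarrow>
       meager_in (subtopology baire_space incr_seqs)
         {s \<in> incr_seqs. bounded (range (\<lambda>n. \<Sum>i<n. x (s i)))} \<and>
       meager_in (subtopology baire_space perms)
         {p \<in> perms. bounded (range (\<lambda>n. \<Sum>i<n. x (p i)))})"
proof
  assume nc: "\<not> contains_copy_of_c0 TYPE('a)"
  show "\<forall>x :: nat \<Rightarrow> 'a. \<not> unconditionally_convergent x \<longrightarrow>
       meager_in (subtopology baire_space incr_seqs)
         {s \<in> incr_seqs. bounded (range (\<lambda>n. \<Sum>i<n. x (s i)))} \<and>
       meager_in (subtopology baire_space perms)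
         {p \<in> perms. bounded (range (\<lambda>n. \<Sum>i<n. x (p i)))}"
  proof (intro allI impI)
    fix x :: "nat \<Rightarrow> 'a" assume nuc: "\<not> unconditionally_convergent x"
    have noC: "\<exists>F. finite F \<and> F \<subseteq> {L..} \<and> C < norm (sum x F)" for L C
    proof (rule ccontr)
      assume a: "\<not> (\<exists>F. finite F \<and> F \<subseteq> {L..} \<and> C < norm (sum x F))"
      have "norm (sum x F) \<le> C" if "finite F" "F \<subseteq> {L..}" for F
        using a that by (simp add: not_less) 
      then have "contains_copy_of_c0 TYPE('a)" by (rule nuc_c0[OF nuc])
      with nc show False by simp
    qed
    show "meager_in (subtopology baire_space incr_seqs)
         {s \<in> incr_seqs. bounded (range (\<lambda>n. \<Sum>i<n. x (s i)))} \<and>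
       meager_in (subtopology baire_space perms)
         {p \<in> perms. bounded (range (\<lambda>n. \<Sum>i<n. x (p i)))}"
      using meager_bdd[OF ext_incr noC] meager_bdd[OF ext_perm noC] by (rule conjI)
  qed
next
  assume R: "\<forall>x :: nat \<Rightarrow> 'a. \<not> unconditionally_convergent x \<longrightarrow>
       meager_in (subtopology baire_space incr_seqs)
         {s \<in> incr_seqs. bounded (range (\<lambda>n. \<Sum>i<n. x (s i)))} \<and>
       meager_in (subtopology baire_space perms)
         {p \<in> perms. bounded (range (\<lambda>n. \<Sum>i<n. x (p i)))}"
  show "\<not> contains_copy_of_c0 TYPE('a)"
  proof
    assume "contains_copy_of_c0 TYPE('a)"
    then obtain x :: "nat \<Rightarrow> 'a" where x1: "\<not> unconditionally_convergent x"
      and x2: "\<not> meager_in (subtopology baire_space incr_seqs)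
              {s \<in> incr_seqs. bounded (range (\<lambda>n. \<Sum>i<n. x (s i)))}"
      using c0_direction by blast
    show False using R[rule_format, OF x1] x2 by simp
  qed
qed

end
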